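(* Let $(X,d)$ be a complete metric space and let $T\colon X\to X$ satisfy (CM2): for all $x,y\in X$, $x\neq y$ implies $d(Tx,Ty)<\frac{1}{2}\{d(x,Ty)+d(y,Tx)\}$. Then the following are equivalent: (i) for every $x\in X$ and every $\varepsilon>0$ there exists $\delta>0$ such that for all $i,j\in\mathbb{N}\cup\{0\}$, $\frac{1}{2}\{d(T^ix,T^{j+1}x)+d(T^jx,T^{i+1}x)\}<\varepsilon+\delta$ implies $d(T^{i+1}x,T^{j+1}x)\le\varepsilon$; (ii) $T$ has a unique fixed point $z\in X$ and the sequence $(T^nx)_{n}$ converges to $z$ for every $x\in X$.
   Context: $T^n$ denotes the $n$-fold composition of $T$, with $T^0$ the identity; $\mathbb{N}=\{1,2,3,\dots\}$. *)

theory Defs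
  imports "HOL-Analysis.Analysis"
begin

end

theory Submission
  imports Defs
begin

lemma cm_le:
  fixes T :: "'a::metric_space \<Rightarrow> 'a"
  assumes CM2: "\<And>x y. x \<noteq> y \<Longrightarrow>
      dist (T x) (T y) < (dist x (T y) + dist y (T x)) / 2"
  shows "dist (T u) (T v) \<le> (dist u (T v) + dist v (T u)) / 2"
proof (cases "u = v")
  case True then show ?thesis by simp
next
  case False then show ?thesis using CM2[of u v] by simp
qed

lemma fix_uniq:
  fixes T :: "'a::metric_space \<Rightarrow> 'a"
  assumes CM2: "\<And>x y. x \<noteq> y \<Longrightarrow>
      dist (T x) (T y) < (dist x (T y) + dist y (T x)) / 2"
  and "T a = a" "T b = b" shows "a = b"
proof (rule ccontr)
  assume "a \<noteq> b"
  from CM2[OF this] assms(2,3) show False by (simp add: dist_commute)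
qed

lemma forward:
  fixes T :: "'a::complete_space \<Rightarrow> 'a"
  assumes CM2: "\<And>x y. x \<noteq> y \<Longrightarrow>
      dist (T x) (T y) < (dist x (T y) + dist y (T x)) / 2"
  and H: "\<forall>x. \<forall>\<epsilon>>0. \<exists>\<delta>>0. \<forall>i j :: nat.
            (dist ((T ^^ i) x) ((T ^^ (j+1)) x) + dist ((T ^^ j) x) ((T ^^ (i+1)) x)) / 2 < \<epsilon> + \<delta>
            \<longrightarrow> dist ((T ^^ (i+1)) x) ((T ^^ (j+1)) x) \<le> \<epsilon>"
  shows "\<exists>z. T z = z \<and> (\<lambda>n. (T ^^ n) x) \<longlonglongrightarrow> z"
proof -
  define s where "s n = (T ^^ n) x" for n
  have sS: "s (Suc n) = T (s n)" for n by (simp add: s_def)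
  have Hs: "\<exists>\<delta>>0. \<forall>i j. (dist (s i) (s (Suc j)) + dist (s j) (s (Suc i))) / 2 < e + \<delta>
            \<longrightarrow> dist (s (Suc i)) (s (Suc j)) \<le> e" if "e > 0" for e
    using H that unfolding s_def Suc_eq_plus1 by blast
  have le: "dist (T u) (T v) \<le> (dist u (T v) + dist v (T u)) / 2" for u v
    using cm_le[OF CM2] by blast
  define d where "d n = dist (s n) (s (Suc n))" for n
  have dec1: "d (Suc n) \<le> d n" for n
  proof -
    have "d (Suc n) \<le> dist (s n) (s (Suc (Suc n))) / 2"
      using le[of "s n" "s (Suc n)"] by (simp add: d_def sS)
    also have "\<dots> \<le> (d n + d (Suc n)) / 2"
      using dist_triangle[of "s n" "s (Suc (Suc n))" "s (Suc n)"] by (simp add: d_def)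
    finally show ?thesis by simp
  qed
  have strict: "d (Suc n) < d n" if "d n > 0" for n
  proof -
    have ne: "s n \<noteq> s (Suc n)" using that by (auto simp: d_def)
    have "d (Suc n) < dist (s n) (s (Suc (Suc n))) / 2"
      using CM2[OF ne] by (simp add: d_def sS)
    also have "\<dots> \<le> (d n + d (Suc n)) / 2"
      using dist_triangle[of "s n" "s (Suc (Suc n))" "s (Suc n)"] by (simp add: d_def)
    finally show ?thesis by simp
  qed
  have "decseq d" using dec1 by (simp add: decseq_SucI)
  moreover have "\<forall>i. 0 \<le> d i" by (simp add: d_def)
  ultimately obtain r where dr: "d \<longlonglongrightarrow> r" and rle: "\<forall>i. r \<le> d i"
    using decseq_convergent by blast
  have r0: "r = 0"
  proof (rule ccontr)
    assume "r \<noteq> 0"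
    have "0 \<le> r" by (rule LIMSEQ_le_const[OF dr]) (simp add: d_def)
    with \<open>r \<noteq> 0\<close> have rpos: "r > 0" by simp
    obtain \<delta> where dp: "\<delta> > 0" and dH: "\<forall>i j. (dist (s i) (s (Suc j)) + dist (s j) (s (Suc i))) / 2 < r + \<delta>
            \<longrightarrow> dist (s (Suc i)) (s (Suc j)) \<le> r" using Hs[OF rpos] by blast
    have "eventually (\<lambda>n. d n < r + \<delta>) sequentially"
      using dr dp by (intro order_tendstoD) auto
    then obtain M where M: "d M < r + \<delta>" by (auto simp: eventually_sequentially)
    have "(dist (s M) (s (Suc (Suc M))) + dist (s (Suc M)) (s (Suc M))) / 2 < r + \<delta>"
      using dist_triangle[of "s M" "s (Suc (Suc M))" "s (Suc M)"] dec1[of M] M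
      by (simp add: d_def)
    then have "d (Suc M) \<le> r" using dH by (simp add: d_def)
    moreover have "d (Suc (Suc M)) < d (Suc M)"
      using strict[of "Suc M"] rpos rle by (metis less_le_trans)
    ultimately show False using rle[rule_format, of "Suc (Suc M)"] by linarith
  qed
  have d0: "d \<longlonglongrightarrow> 0" using dr r0 by simp
  have "Cauchy s"
  proof (rule metric_CauchyI)
    fix e :: real assume "e > 0"
    define \<epsilon> where "\<epsilon> = e / 4"
    have ep: "\<epsilon> > 0" using \<open>e > 0\<close> by (simp add: \<epsilon>_def)
    obtain \<delta> where dp: "\<delta> > 0" and dH: "\<forall>i j. (dist (s i) (s (Suc j)) + dist (s j) (s (Suc i))) / 2 < \<epsilon> + \<delta>
            \<longrightarrow> dist (s (Suc i)) (s (Suc j)) \<le> \<epsilon>" using Hs[OF ep] by blast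
    define \<delta>' where "\<delta>' = min \<delta> \<epsilon>"
    have d'p: "\<delta>' > 0" using dp ep by (simp add: \<delta>'_def)
    have "eventually (\<lambda>n. d n < \<delta>' / 4) sequentially"
      using d0 d'p by (intro order_tendstoD) auto
    then obtain N where N: "d N < \<delta>' / 4" by (auto simp: eventually_sequentially)
    have claim: "dist (s N) (s m) < \<epsilon> + \<delta>' / 2" if "N \<le> m" for m
      using that
    proof (induct m rule: dec_induct)
      case base then show ?case using ep d'p by simp
    next
      case (step m)
      define D where "D = dist (s (Suc N)) (s (Suc m))"
      define X where "X = dist (s N) (s (Suc m))"
      define Y where "Y = dist (s m) (s (Suc N))"
      define Z where "Z = dist (s N) (s m)"
      have "D \<le> (X + Y) / 2" using le[of "s N" "s m"] by (simp add: D_def X_def Y_def sS)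
      moreover have "X \<le> d N + D"
        using dist_triangle[of "s N" "s (Suc m)" "s (Suc N)"] by (simp add: X_def D_def d_def)
      moreover have "Y \<le> Z + d N"
        using dist_triangle[of "s m" "s (Suc N)" "s N"] by (simp add: Y_def Z_def d_def dist_commute)
      moreover have "(X + Y) / 2 < \<epsilon> + \<delta>' \<longrightarrow> D \<le> \<epsilon>"
        using dH \<open>\<delta>' = min \<delta> \<epsilon>\<close> by (auto simp: D_def X_def Y_def)
      moreover have "Z < \<epsilon> + \<delta>' / 2" using step by (simp add: Z_def)
      ultimately have f: "2 * D \<le> X + Y" "X \<le> d N + D" "Y \<le> Z + d N"
        "X + Y < 2 * \<epsilon> + 2 * \<delta>' \<longrightarrow> D \<le> \<epsilon>" "2 * Z < 2 * \<epsilon> + \<delta>'"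
        by auto
      have g: "4 * d N < \<delta>'" using N by simp
      have "X < \<epsilon> + \<delta>' / 2"
      proof (cases "X + Y < 2 * \<epsilon> + 2 * \<delta>'")
        case True then show ?thesis using f g by linarith
      next
        case False then show ?thesis using f g by linarith
      qed
      then show ?case by (simp add: X_def)
    qed
    show "\<exists>M. \<forall>m\<ge>M. \<forall>n\<ge>M. dist (s m) (s n) < e"
    proof (intro exI allI impI)
      fix m n assume "N \<le> m" "N \<le> n"
      have "dist (s m) (s n) \<le> dist (s N) (s m) + dist (s N) (s n)"
        by (simp add: dist_triangle3)
      also have "\<dots> < 2 * \<epsilon> + \<delta>'"
        using claim[OF \<open>N \<le> m\<close>] claim[OF \<open>N \<le> n\<close>] by linarith
      also have "\<dots> \<le> 3 * \<epsilon>" by (simp add: \<delta>'_def)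
      also have "\<dots> < e" using \<open>e > 0\<close> by (simp add: \<epsilon>_def)
      finally show "dist (s m) (s n) < e" .
    qed
  qed
  then obtain z where sz: "s \<longlonglongrightarrow> z" using Cauchy_convergent convergent_def by blast
  have sz1: "(\<lambda>n. s (Suc n)) \<longlonglongrightarrow> z" using sz by (rule LIMSEQ_Suc)
  have "dist z (T z) \<le> (dist z (T z) + dist z z) / 2"
  proof (rule LIMSEQ_le)
    show "(\<lambda>n. dist (s (Suc n)) (T z)) \<longlonglongrightarrow> dist z (T z)"
      by (intro tendsto_intros sz1)
    show "(\<lambda>n. (dist (s n) (T z) + dist z (s (Suc n))) / 2) \<longlonglongrightarrow> (dist z (T z) + dist z z) / 2"
      by (intro tendsto_intros sz sz1) simp
    show "\<exists>N. \<forall>n\<ge>N. dist (s (Suc n)) (T z) \<le> (dist (s n) (T z) + dist z (s (Suc n))) / 2"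
      using le sS by metis
  qed
  then have "T z = z" by simp
  then show ?thesis using sz unfolding s_def by blast
qed

lemma posmin:
  fixes f :: "nat \<Rightarrow> real"
  assumes "\<forall>j. f j > 0" "c > 0" "eventually (\<lambda>j. f j > c) sequentially"
  shows "\<exists>\<gamma>>0. \<forall>j. f j \<ge> \<gamma>"
proof -
  obtain M where M: "\<forall>j\<ge>M. f j > c" using assms(3) by (auto simp: eventually_sequentially)
  define \<gamma> where "\<gamma> = Min (insert c (f ` {..<M}))"
  have "\<gamma> > 0" unfolding \<gamma>_def using assms(1,2) by (subst Min_gr_iff) auto
  moreover have "f j \<ge> \<gamma>" for j
  proof (cases "j < M")
    case True then show ?thesis unfolding \<gamma>_def by (intro Min_le) auto
  next
    case False
    then have "f j > c" using M by simp
    moreover have "\<gamma> \<le> c" unfolding \<gamma>_def by (intro Min_le) auto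
    ultimately show ?thesis by simp
  qed
  ultimately show ?thesis by blast
qed

lemma backward:
  fixes T :: "'a::metric_space \<Rightarrow> 'a"
  assumes CM2: "\<And>x y. x \<noteq> y \<Longrightarrow>
      dist (T x) (T y) < (dist x (T y) + dist y (T x)) / 2"
  and Tz: "T z = z" and conv: "(\<lambda>n. (T ^^ n) x) \<longlonglongrightarrow> z" and ep: "\<epsilon> > 0"
  shows "\<exists>\<delta>>0. \<forall>i j :: nat.
            (dist ((T ^^ i) x) ((T ^^ (j+1)) x) + dist ((T ^^ j) x) ((T ^^ (i+1)) x)) / 2 < \<epsilon> + \<delta>
            \<longrightarrow> dist ((T ^^ (i+1)) x) ((T ^^ (j+1)) x) \<le> \<epsilon>"
proof -
  define s where "s n = (T ^^ n) x" for n
  have sS: "s (Suc n) = T (s n)" for n by (simp add: s_def)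
  have "s = (\<lambda>n. (T ^^ n) x)" by (simp add: fun_eq_iff s_def)
  then have sz: "s \<longlonglongrightarrow> z" using conv by simp
  have sz1: "(\<lambda>n. s (Suc n)) \<longlonglongrightarrow> z" using sz by (rule LIMSEQ_Suc)
  have le: "dist (T u) (T v) \<le> (dist u (T v) + dist v (T u)) / 2" for u v
    using cm_le[OF CM2] by blast
  define A where "A i j = (dist (s i) (s (Suc j)) + dist (s j) (s (Suc i))) / 2" for i j
  define G where "G i j = A i j - dist (s (Suc i)) (s (Suc j))" for i j
  have Gsym: "G i j = G j i" for i j
    by (simp add: G_def A_def dist_commute add.commute)
  have Gpos: "G i j > 0" if "s i \<noteq> z" for i j
  proof (cases "s i = s j")
    case True
    have "s i \<noteq> T (s i)" using fix_uniq[OF CM2, of "s i" z] Tz that by metis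
    then show ?thesis using True by (simp add: G_def A_def sS)
  next
    case False
    then show ?thesis using CM2[OF False] by (simp add: G_def A_def sS)
  qed
  have gam: "\<exists>g>0. \<forall>j. G i j \<ge> g" if "s i \<noteq> z" for i
  proof -
    define L where "L = (dist (s i) z + dist z (s (Suc i))) / 2"
    define R where "R = dist (s (Suc i)) z"
    have "R < L" using CM2[OF that] Tz by (simp add: L_def R_def sS)
    have "(\<lambda>j. G i j) \<longlonglongrightarrow> L - R"
      unfolding G_def A_def L_def R_def
      by (intro tendsto_intros sz sz1) simp
    then have "eventually (\<lambda>j. G i j > (L - R) / 2) sequentially"
      using \<open>R < L\<close> by (intro order_tendstoD) auto
    then show ?thesis using posmin[of "G i" "(L - R) / 2"] Gpos[OF that] \<open>R < L\<close> by auto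
  qed
  have "\<forall>i. \<exists>g. s i \<noteq> z \<longrightarrow> g > 0 \<and> (\<forall>j. G i j \<ge> g)" using gam by metis
  then obtain \<gamma> where \<gamma>: "\<And>i. s i \<noteq> z \<Longrightarrow> \<gamma> i > 0 \<and> (\<forall>j. G i j \<ge> \<gamma> i)" by metis
  have "eventually (\<lambda>n. dist (s n) z < \<epsilon> / 2) sequentially"
    using sz ep unfolding tendsto_iff by (metis half_gt_zero)
  then obtain N where N: "\<And>n. n \<ge> N \<Longrightarrow> dist (s n) z < \<epsilon> / 2"
    by (auto simp: eventually_sequentially)
  have close: "dist (s m) (s n) < \<epsilon>" if "m \<ge> N" "n \<ge> N" for m n
  proof -
    have "dist (s m) (s n) \<le> dist (s m) z + dist (s n) z" by (rule dist_triangle2)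
    then show ?thesis using N[OF that(1)] N[OF that(2)] by linarith
  qed
  have stay: "s m = z" if "s k = z" "k \<le> m" for k m
    using that(2) by (induct m rule: dec_induct) (use that(1) Tz sS in auto)
  define K where "K = {k. k < N \<and> s k \<noteq> z}"
  have finK: "finite K" unfolding K_def by simp
  define \<delta> where "\<delta> = Min (insert 1 (\<gamma> ` K))"
  have dpos: "\<delta> > 0" unfolding \<delta>_def using finK \<gamma> by (subst Min_gr_iff) (auto simp: K_def)
  have dle: "\<delta> \<le> \<gamma> k" if "k \<in> K" for k unfolding \<delta>_def using finK that by (intro Min_le) auto
  have main: "dist (s (Suc i)) (s (Suc j)) \<le> \<epsilon>" if "A i j < \<epsilon> + \<delta>" for i j
  proof (rule ccontr)
    assume bad: "\<not> dist (s (Suc i)) (s (Suc j)) \<le> \<epsilon>"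
    have nb: "\<not> (Suc i \<ge> N \<and> Suc j \<ge> N)" using bad close by force
    have "\<exists>k\<in>K. k = i \<or> k = j"
    proof (rule ccontr)
      assume nk: "\<not> (\<exists>k\<in>K. k = i \<or> k = j)"
      show False
      proof (cases "Suc i < N")
        case True
        then have "i < N" by simp
        then have "s i = z" using nk unfolding K_def by blast
        then have si1: "s (Suc i) = z" using Tz sS by simp
        have "s (Suc j) \<noteq> z" using bad si1 ep by auto
        then have "\<not> i \<le> Suc j" using stay[OF \<open>s i = z\<close>] by blast
        then have "j < N" "s j \<noteq> z" using True \<open>s (Suc j) \<noteq> z\<close> Tz sS by auto
        then show False using nk by (auto simp: K_def)
      next
        case False
        then have True': "Suc j < N" using nb by simp
        then have "j < N" by simp
        then have "s j = z" using nk unfolding K_def by blast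
        then have sj1: "s (Suc j) = z" using Tz sS by simp
        have "s (Suc i) \<noteq> z" using bad sj1 ep by auto
        then have "\<not> j \<le> Suc i" using stay[OF \<open>s j = z\<close>] by blast
        then have "i < N" "s i \<noteq> z" using True' \<open>s (Suc i) \<noteq> z\<close> Tz sS by auto
        then show False using nk by (auto simp: K_def)
      qed
    qed
    then have "G i j \<ge> \<delta>"
    proof
      fix k assume k: "k \<in> K" "k = i \<or> k = j"
      then have sk: "s k \<noteq> z" by (simp add: K_def)
      from k(2) show ?thesis
      proof
        assume "k = i" then show ?thesis using \<gamma>[OF sk] dle[OF k(1)] by (metis order_trans)
      next
        assume "k = j" then show ?thesis using \<gamma>[OF sk] dle[OF k(1)] Gsym[of i j] by (metis order_trans)
      qed
    qed
    then show False using bad that by (simp add: G_def)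
  qed
  show ?thesis
    using dpos main unfolding A_def s_def Suc_eq_plus1 by blast
qed

theorem theorem4p2:
  fixes T :: "'a::complete_space \<Rightarrow> 'a"
  assumes CM2: "\<And>x y. x \<noteq> y \<Longrightarrow>
      dist (T x) (T y) < (dist x (T y) + dist y (T x)) / 2"
  shows "(\<forall>x. \<forall>\<epsilon>>0. \<exists>\<delta>>0. \<forall>i j :: nat.
            (dist ((T ^^ i) x) ((T ^^ (j+1)) x) + dist ((T ^^ j) x) ((T ^^ (i+1)) x)) / 2 < \<epsilon> + \<delta>
            \<longrightarrow> dist ((T ^^ (i+1)) x) ((T ^^ (j+1)) x) \<le> \<epsilon>)
     \<longleftrightarrow>
         ((\<exists>!z. T z = z) \<and>
          (\<exists>z. T z = z \<and> (\<forall>x. (\<lambda>n. (T ^^ n) x) \<longlonglongrightarrow> z)))"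
proof
  assume H: "\<forall>x. \<forall>\<epsilon>>0. \<exists>\<delta>>0. \<forall>i j :: nat.
            (dist ((T ^^ i) x) ((T ^^ (j+1)) x) + dist ((T ^^ j) x) ((T ^^ (i+1)) x)) / 2 < \<epsilon> + \<delta>
            \<longrightarrow> dist ((T ^^ (i+1)) x) ((T ^^ (j+1)) x) \<le> \<epsilon>"
  have F: "\<exists>z. T z = z \<and> (\<lambda>n. (T ^^ n) x) \<longlonglongrightarrow> z" for x
    using forward[OF CM2 H] .
  obtain z0 where z0: "T z0 = z0" using F by blast
  have U: "a = b" if "T a = a" "T b = b" for a b using fix_uniq[OF CM2 that] .
  have "\<forall>x. (\<lambda>n. (T ^^ n) x) \<longlonglongrightarrow> z0"
  proof
    fix x
    obtain z where "T z = z" "(\<lambda>n. (T ^^ n) x) \<longlonglongrightarrow> z" using F by blast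
    then show "(\<lambda>n. (T ^^ n) x) \<longlonglongrightarrow> z0" using U[OF _ z0] by metis
  qed
  then show "(\<exists>!z. T z = z) \<and> (\<exists>z. T z = z \<and> (\<forall>x. (\<lambda>n. (T ^^ n) x) \<longlonglongrightarrow> z))"
    using z0 U by blast
next
  assume "(\<exists>!z. T z = z) \<and> (\<exists>z. T z = z \<and> (\<forall>x. (\<lambda>n. (T ^^ n) x) \<longlonglongrightarrow> z))"
  then obtain z where "T z = z" "\<forall>x. (\<lambda>n. (T ^^ n) x) \<longlonglongrightarrow> z" by blast
  then show "\<forall>x. \<forall>\<epsilon>>0. \<exists>\<delta>>0. \<forall>i j :: nat.
            (dist ((T ^^ i) x) ((T ^^ (j+1)) x) + dist ((T ^^ j) x) ((T ^^ (i+1)) x)) / 2 < \<epsilon> + \<delta>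
            \<longrightarrow> dist ((T ^^ (i+1)) x) ((T ^^ (j+1)) x) \<le> \<epsilon>"
    using backward[OF CM2] by blast
qed

end
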